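(* Let $k\ge0$ and let $G=(X\cup Y,E)$ be a connected bipartite graph. Let $D=(<_X,<_Y)$ be a 2-layer $k$-planar drawing of $G$, and let $S\subseteq X$ be a set of $2k+1$ vertices that are consecutive in $<_X$. Let $x$ and $x'$ be the leftmost and rightmost vertex of $S$ in $<_X$. Then for every connected component $C$ of $G[V(G)\setminus N[S]]$, the vertices of $C\cap X$ are either all to the left of $x$ (i.e., $<_X x$) or all to the right of $x'$.
   Context: $N[S]$ denotes $S$ together with all neighbors of vertices of $S$; $G[U]$ is the induced subgraph. A 2-layer drawing of a bipartite graph $G=(X\cup Y,E)$ ($X\cap Y=\emptyset$, $E\subseteq X\times Y$) is a pair $(<_X,<_Y)$ of strict linear orders on $X$ and $Y$. Edges $\{x,y\},\{x',y'\}$ with $x\ne x'\in X$, $y\ne y'\in Y$ cross if $x<_Xx'$ and $y'<_Yy$. The drawing is $k$-planar if every edge crosses at most $k$ edges. *)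

theory Defs
  imports Main
begin

definition bipartite_graph :: "'v set \<Rightarrow> 'v set \<Rightarrow> ('v \<times> 'v) set \<Rightarrow> bool" where
  "bipartite_graph X Y E \<longleftrightarrow> finite X \<and> finite Y \<and> X \<inter> Y = {} \<and> E \<subseteq> X \<times> Y"

definition adj :: "('v \<times> 'v) set \<Rightarrow> 'v \<Rightarrow> 'v \<Rightarrow> bool" where
  "adj E u v \<longleftrightarrow> (u, v) \<in> E \<or> (v, u) \<in> E"

definition induced_adj :: "('v \<times> 'v) set \<Rightarrow> 'v set \<Rightarrow> ('v \<times> 'v) set" where
  "induced_adj E U = {(u, v). u \<in> U \<and> v \<in> U \<and> adj E u v}"

definition closed_nbhd :: "('v \<times> 'v) set \<Rightarrow> 'v set \<Rightarrow> 'v set" where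
  "closed_nbhd E S = S \<union> {v. \<exists>s\<in>S. adj E s v}"

definition connected_graph :: "'v set \<Rightarrow> ('v \<times> 'v) set \<Rightarrow> bool" where
  "connected_graph V E \<longleftrightarrow> (\<forall>u\<in>V. \<forall>v\<in>V. (u, v) \<in> (induced_adj E V)\<^sup>*)"

definition is_component :: "('v \<times> 'v) set \<Rightarrow> 'v set \<Rightarrow> 'v set \<Rightarrow> bool" where
  "is_component E U C \<longleftrightarrow> (\<exists>u\<in>U. C = {v. (u, v) \<in> (induced_adj E U)\<^sup>*})"

text \<open>A 2-layer drawing: strict linear orders LX on X and LY on Y
  ((a,b) \<in> LX means a <_X b).\<close>
definition two_layer_drawing ::
  "'v set \<Rightarrow> 'v set \<Rightarrow> ('v \<times> 'v) set \<Rightarrow> ('v \<times> 'v) set \<Rightarrow> bool" where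
  "two_layer_drawing X Y LX LY \<longleftrightarrow>
     LX \<subseteq> X \<times> X \<and> strict_linear_order_on X LX \<and>
     LY \<subseteq> Y \<times> Y \<and> strict_linear_order_on Y LY"

definition crosses ::
  "('v \<times> 'v) set \<Rightarrow> ('v \<times> 'v) set \<Rightarrow> 'v \<times> 'v \<Rightarrow> 'v \<times> 'v \<Rightarrow> bool" where
  "crosses LX LY e e' \<longleftrightarrow>
     (case e of (x, y) \<Rightarrow> case e' of (x', y') \<Rightarrow>
        x \<noteq> x' \<and> y \<noteq> y' \<and>
        (((x, x') \<in> LX \<and> (y', y) \<in> LY) \<or> ((x', x) \<in> LX \<and> (y, y') \<in> LY)))"

definition k_planar ::
  "nat \<Rightarrow> ('v \<times> 'v) set \<Rightarrow> ('v \<times> 'v) set \<Rightarrow> ('v \<times> 'v) set \<Rightarrow> bool" where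
  "k_planar k E LX LY \<longleftrightarrow> (\<forall>e\<in>E. card {e'\<in>E. crosses LX LY e e'} \<le> k)"

definition consecutive :: "'v set \<Rightarrow> ('v \<times> 'v) set \<Rightarrow> 'v set \<Rightarrow> bool" where
  "consecutive X LX S \<longleftrightarrow> S \<subseteq> X \<and>
     (\<forall>a\<in>S. \<forall>b\<in>S. \<forall>z\<in>X. (a, z) \<in> LX \<and> (z, b) \<in> LX \<longrightarrow> z \<in> S)"

end

theory Submission
  imports Defs
begin

theorem lemma4p1:
  fixes X Y :: "'v set" and E LX LY :: "('v \<times> 'v) set" and k :: nat
    and S :: "'v set" and x x' :: 'v
  assumes "bipartite_graph X Y E"
    and "connected_graph (X \<union> Y) E"
    and "two_layer_drawing X Y LX LY"
    and "k_planar k E LX LY"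
    and "consecutive X LX S"
    and "card S = 2 * k + 1"
    and "x \<in> S" and "\<forall>s\<in>S. s \<noteq> x \<longrightarrow> (x, s) \<in> LX"
    and "x' \<in> S" and "\<forall>s\<in>S. s \<noteq> x' \<longrightarrow> (s, x') \<in> LX"
    and "is_component E ((X \<union> Y) - closed_nbhd E S) C"
  shows "(\<forall>c\<in>C \<inter> X. (c, x) \<in> LX) \<or> (\<forall>c\<in>C \<inter> X. (x', c) \<in> LX)"
proof (rule ccontr)
  assume neg: "\<not> ?thesis"
  have fX: "finite X" and fY: "finite Y" and XY: "X \<inter> Y = {}" and EXY: "E \<subseteq> X \<times> Y"
    using assms(1) unfolding bipartite_graph_def by auto
  have finE: "finite E" using EXY fX fY by (meson finite_SigmaI finite_subset)
  have trX: "trans LX" and irX: "irrefl LX" and totX: "total_on X LX" and LXs: "LX \<subseteq> X \<times> X"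
    and trY: "trans LY" and irY: "irrefl LY" and totY: "total_on Y LY"
    using assms(3) unfolding two_layer_drawing_def strict_linear_order_on_def by auto
  have SX: "S \<subseteq> X" and consec: "\<forall>a\<in>S. \<forall>b\<in>S. \<forall>z\<in>X. (a, z) \<in> LX \<and> (z, b) \<in> LX \<longrightarrow> z \<in> S"
    using assms(5) unfolding consecutive_def by blast+
  have finS: "finite S" using assms(6) card.infinite by fastforce
  have lx: "\<And>s. s \<in> S \<Longrightarrow> s = x \<or> (x, s) \<in> LX" using assms(8) by blast
  have rx: "\<And>s. s \<in> S \<Longrightarrow> s = x' \<or> (s, x') \<in> LX" using assms(10) by blast
  have irr: "\<And>a. (a, a) \<notin> LX" using irX by (simp add: irrefl_def)
  have irrY: "\<And>a. (a, a) \<notin> LY" using irY by (simp add: irrefl_def)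
  have tr: "\<And>a b c. (a, b) \<in> LX \<Longrightarrow> (b, c) \<in> LX \<Longrightarrow> (a, c) \<in> LX" using trX by (meson transD)
  have trY': "\<And>a b c. (a, b) \<in> LY \<Longrightarrow> (b, c) \<in> LY \<Longrightarrow> (a, c) \<in> LY" using trY by (meson transD)
  have xx': "x = x' \<or> (x, x') \<in> LX" using lx assms(9) by blast
  have leftS: "(a, s) \<in> LX" if "(a, x) \<in> LX" "s \<in> S" for a s
    using lx[OF that(2)] tr[OF that(1)] that(1) by blast
  have rightS: "(s, b) \<in> LX" if "(x', b) \<in> LX" "s \<in> S" for b s
    using rx[OF that(2)] tr[OF _ that(1)] that(1) by blast
  have notboth: False if "(c, x) \<in> LX" "(x', c) \<in> LX" for c
  proof -
    have "(c, x') \<in> LX" using xx' that(1) tr[OF that(1)] by blast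
    thus False using tr[OF _ that(2)] irr by blast
  qed
  have nb: "\<exists>w. (s, w) \<in> E" if sS: "s \<in> S" and yY: "y \<in> Y" for s y
  proof -
    have "s \<in> X" using sS SX by auto
    hence sy: "s \<noteq> y" using yY XY by auto
    have "(s, y) \<in> (induced_adj E (X \<union> Y))\<^sup>*"
      using assms(2) \<open>s \<in> X\<close> yY unfolding connected_graph_def by auto
    then obtain w where "(s, w) \<in> induced_adj E (X \<union> Y)"
      using sy by (metis converse_rtranclE)
    hence "adj E s w" unfolding induced_adj_def by auto
    thus ?thesis using EXY \<open>s \<in> X\<close> XY unfolding adj_def by auto
  qed
  have cross: False if aX: "a \<in> X" and bX: "b \<in> X" and yY: "y \<in> Y"
    and ay: "(a, y) \<in> E" and yb: "(b, y) \<in> E" and yN: "y \<notin> closed_nbhd E S"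
    and al: "(a, x) \<in> LX" and br: "(x', b) \<in> LX" for a b y
  proof -
    have "\<forall>s\<in>S. \<exists>w. (s, w) \<in> E" using nb yY by blast
    then obtain f where f: "\<And>s. s \<in> S \<Longrightarrow> (s, f s) \<in> E" by metis
    have fY': "\<And>s. s \<in> S \<Longrightarrow> f s \<in> Y" using f EXY by auto
    have fne: "\<And>s. s \<in> S \<Longrightarrow> f s \<noteq> y"
    proof
      fix s assume "s \<in> S" "f s = y"
      hence "y \<in> closed_nbhd E S" using f[OF \<open>s \<in> S\<close>] \<open>s \<in> S\<close> unfolding closed_nbhd_def adj_def by blast
      thus False using yN by simp
    qed
    define S1 where "S1 = {s\<in>S. (f s, y) \<in> LY}"
    define S2 where "S2 = {s\<in>S. (y, f s) \<in> LY}"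
    have SU: "S \<subseteq> S1 \<union> S2"
    proof
      fix s assume sS: "s \<in> S"
      have "(f s, y) \<in> LY \<or> (y, f s) \<in> LY"
        using totY fY'[OF sS] fne[OF sS] yY unfolding total_on_def by blast
      thus "s \<in> S1 \<union> S2" using sS unfolding S1_def S2_def by blast
    qed
    define g where "g = (\<lambda>s. (s, f s))"
    have inj: "inj_on g A" for A unfolding g_def inj_on_def by auto
    have c1: "g ` S1 \<subseteq> {e'\<in>E. crosses LX LY (a, y) e'}"
    proof
      fix e assume "e \<in> g ` S1"
      then obtain s where s: "s \<in> S" "(f s, y) \<in> LY" "e = (s, f s)" unfolding S1_def g_def by auto
      have "(a, s) \<in> LX" using leftS al s by auto
      hence "a \<noteq> s" using irr by auto
      thus "e \<in> {e'\<in>E. crosses LX LY (a, y) e'}"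
        using s f[OF s(1)] fne[OF s(1)] \<open>(a, s) \<in> LX\<close> \<open>a \<noteq> s\<close> by (simp add: crosses_def)
    qed
    have c2: "g ` S2 \<subseteq> {e'\<in>E. crosses LX LY (b, y) e'}"
    proof
      fix e assume "e \<in> g ` S2"
      then obtain s where s: "s \<in> S" "(y, f s) \<in> LY" "e = (s, f s)" unfolding S2_def g_def by auto
      have "(s, b) \<in> LX" using rightS br s by auto
      hence "b \<noteq> s" using irr by auto
      thus "e \<in> {e'\<in>E. crosses LX LY (b, y) e'}"
        using s f[OF s(1)] fne[OF s(1)] \<open>(s, b) \<in> LX\<close> \<open>b \<noteq> s\<close> by (simp add: crosses_def)
    qed
    have k1: "card {e'\<in>E. crosses LX LY (a, y) e'} \<le> k" using assms(4) ay unfolding k_planar_def by auto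
    have k2: "card {e'\<in>E. crosses LX LY (b, y) e'} \<le> k" using assms(4) yb unfolding k_planar_def by auto
    have "card S1 = card (g ` S1)" using inj by (simp add: card_image)
    also have "\<dots> \<le> card {e'\<in>E. crosses LX LY (a, y) e'}"
      by (rule card_mono[OF _ c1]) (simp add: finE)
    also have "\<dots> \<le> k" by (rule k1)
    finally have s1: "card S1 \<le> k" .
    have "card S2 = card (g ` S2)" using inj by (simp add: card_image)
    also have "\<dots> \<le> card {e'\<in>E. crosses LX LY (b, y) e'}"
      by (rule card_mono[OF _ c2]) (simp add: finE)
    also have "\<dots> \<le> k" by (rule k2)
    finally have s2: "card S2 \<le> k" .
    have "card S \<le> card (S1 \<union> S2)" using SU finS
      by (intro card_mono) (auto simp: S1_def S2_def)
    also have "\<dots> \<le> card S1 + card S2" by (rule card_Un_le)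
    finally show False using s1 s2 assms(6) by simp
  qed
  define U where "U = (X \<union> Y) - closed_nbhd E S"
  define R where "R = induced_adj E U"
  obtain u where uU: "u \<in> U" and C: "C = {v. (u, v) \<in> R\<^sup>*}"
    using assms(11) unfolding is_component_def U_def R_def by auto
  have US: "\<And>v. v \<in> U \<Longrightarrow> v \<notin> S" unfolding U_def closed_nbhd_def by auto
  have side: "\<And>v. v \<in> U \<Longrightarrow> v \<in> X \<Longrightarrow> (v, x) \<in> LX \<or> (x', v) \<in> LX"
  proof -
    fix v assume "v \<in> U" "v \<in> X"
    hence "v \<notin> S" using US by auto
    show "(v, x) \<in> LX \<or> (x', v) \<in> LX"
    proof (rule ccontr)
      assume "\<not> ?thesis"
      hence "(x, v) \<in> LX" "(v, x') \<in> LX"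
        using totX \<open>v \<in> X\<close> SX assms(7,9) \<open>v \<notin> S\<close> unfolding total_on_def by (metis subsetD)+
      thus False using consec assms(7,9) \<open>v \<in> X\<close> \<open>v \<notin> S\<close> by blast
    qed
  qed
  define lft where "lft v \<longleftrightarrow> (\<exists>c\<in>X \<inter> U. (c = v \<or> adj E c v) \<and> (c, x) \<in> LX)" for v
  have propg: "lft q" if "(p, q) \<in> R\<^sup>*" "lft p" for p q
    using that
  proof (induction rule: rtrancl_induct)
    case base thus ?case by simp
  next
    case (step q r)
    have qr: "q \<in> U" "r \<in> U" "adj E q r" using step.hyps(2) unfolding R_def induced_adj_def by auto
    show ?case
    proof (cases "q \<in> X")
      case True
      hence "r \<in> Y" using qr(3) EXY XY unfolding adj_def by auto
      have "\<And>c. c \<in> X \<Longrightarrow> \<not> adj E c q" using True EXY XY unfolding adj_def by auto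
      hence "(q, x) \<in> LX" using step.IH step.prems(1) True unfolding lft_def by auto
      thus ?thesis unfolding lft_def using True qr by (auto simp: adj_def)
    next
      case False
      hence qY: "q \<in> Y" using qr(1) unfolding U_def by auto
      hence rX: "r \<in> X" using qr(3) EXY XY unfolding adj_def by auto
      obtain c where c: "c \<in> X" "c \<in> U" "c = q \<or> adj E c q" "(c, x) \<in> LX"
        using step.IH step.prems unfolding lft_def by auto
      have cq: "(c, q) \<in> E" using c(1,3) False EXY unfolding adj_def by auto
      have rq: "(r, q) \<in> E" using qr(3) rX XY EXY unfolding adj_def by auto
      have "q \<notin> closed_nbhd E S" using qr(1) unfolding U_def by auto
      have "(r, x) \<in> LX"
      proof (rule ccontr)
        assume "(r, x) \<notin> LX"
        hence "(x', r) \<in> LX" using side qr(2) rX by auto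
        thus False using cross[OF c(1) rX qY cq rq \<open>q \<notin> closed_nbhd E S\<close> c(4)] by simp
      qed
      thus ?thesis unfolding lft_def using rX qr by auto
    qed
  qed
  have symR: "sym R" unfolding R_def induced_adj_def sym_def adj_def by auto
  from neg obtain c1 c2 where c1: "c1 \<in> C" "c1 \<in> X" "(c1, x) \<notin> LX"
    and c2: "c2 \<in> C" "c2 \<in> X" "(x', c2) \<notin> LX" by auto
  have CU: "\<And>v. v \<in> C \<Longrightarrow> v \<in> U"
  proof -
    fix v assume "v \<in> C"
    hence "(u, v) \<in> R\<^sup>*" using C by auto
    thus "v \<in> U" using uU by (induction rule: rtrancl_induct) (auto simp: R_def induced_adj_def)
  qed
  have c1r: "(x', c1) \<in> LX" using side CU c1 by blast
  have c2l: "(c2, x) \<in> LX" using side CU c2 by blast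
  have "(u, c1) \<in> R\<^sup>*" "(u, c2) \<in> R\<^sup>*" using c1 c2 C by auto
  moreover have "(c2, u) \<in> R\<^sup>*" using \<open>(u, c2) \<in> R\<^sup>*\<close> sym_rtrancl[OF symR] by (meson symD)
  ultimately have "(c2, c1) \<in> R\<^sup>*" by auto
  moreover have "lft c2" unfolding lft_def using c2 c2l CU by auto
  ultimately have "lft c1" using propg by blast
  then obtain c where c: "c \<in> X" "c = c1 \<or> adj E c c1" "(c, x) \<in> LX" unfolding lft_def by auto
  have "c = c1" using c c1(2) EXY XY unfolding adj_def by auto
  thus False using c(3) c1r notboth by blast
qed

end
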